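(* Let $q, q'\in\mathbb{N}_+$, and fix $p,n,\sigma,\vec u,W_i,\mathcal{L}_+,R$ as in the context. Then there exists $\varepsilon_0>0$ such that for every $\varepsilon$ with $0<\varepsilon<\varepsilon_0$, $\varepsilon<\frac{R-p}{2}$ and $\varepsilon^q<\frac{p^q(R^q-p^q)}{((n-1)(p-1)+1)^q}$, every basis $[\vec b_1,\dots,\vec b_n]$ of the lattice $\tilde{\mathcal{L}}=\tilde{\mathcal{L}}(\varepsilon)$ that minimizes $\sum_{i=1}^n\|\vec b_i\|_q^{q'}$ over all bases of $\tilde{\mathcal{L}}$ does not contain $\pm\vec v_1$, the shortest nonzero vector of $\tilde{\mathcal{L}}$.
   Context: Let $p\ge7$ be prime, $n\ge2$, $\sigma\in\{2,3\}^{n-1}$ with $\sum_{i=1}^{n-1}\sigma_i^q=p^q-1$ and $\|k\sigma\bmod p\|_q>\|\sigma\bmod p\|_q$ for all integers $k\not\equiv0,\pm1\pmod p$, where $|\alpha|_p=\min_{z\in\mathbb{Z}}|\alpha-zp|$ and $\|\vec x\bmod p\|_q=(\sum_i|x_i|_p^q)^{1/q}$; if $q\ge2$ assume $4n-3>2p$. Put $\vec u=(1,\sigma)\in\mathbb{R}^n$, $W_i=p\vec e_i$, $\mathcal{L}_+=\operatorname{span}_{\mathbb{Z}}(W_1,\dots,W_n,\vec u)$, and fix $R>p$ with $\mathcal{L}_+\cap\mathcal{B}_q(R)=\{\vec0,\pm W_1,\dots,\pm W_n,\pm\vec u\}$, where $\mathcal{B}_q(r)=\{\vec x:\|\vec x\|_q<r\}$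 and $\|\vec x\|_q=(\sum_i|x_i|^q)^{1/q}$. For $\varepsilon>0$, in $\mathbb{R}^{n+1}$ let $\vec v_1=(W_1,\varepsilon)$, $\vec v_i=(W_i,2\varepsilon)$ for $2\le i\le n$, $\tilde{\vec u}=\frac1p\sum_{i=1}^nu_i\vec v_i$, and $\tilde{\mathcal{L}}(\varepsilon)=\operatorname{span}_{\mathbb{Z}}(\vec v_1,\dots,\vec v_n,\tilde{\vec u})$. *)

theory Defs
  imports Complex_Main "HOL-Computational_Algebra.Primes"
begin

text \<open>Vectors of R^m are functions nat => real that vanish outside
  the coordinates 0..m-1 (0-indexed). Coordinate j (0-indexed) is the paper's
  coordinate j+1. For R^(n+1), coordinate n is the extra (epsilon) coordinate.\<close>

definition absp :: "nat \<Rightarrow> int \<Rightarrow> int" where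
  "absp p a = Inf {\<bar>a - z * int p\<bar> | z. True}"

definition modp_norm :: "nat \<Rightarrow> nat \<Rightarrow> nat \<Rightarrow> (nat \<Rightarrow> int) \<Rightarrow> real" where
  "modp_norm q p n s = (\<Sum>i=1..n-1. real_of_int (absp p (s i)) ^ q) powr (1 / real q)"

definition lq_norm :: "nat \<Rightarrow> nat \<Rightarrow> (nat \<Rightarrow> real) \<Rightarrow> real" where
  "lq_norm q m x = (\<Sum>j<m. \<bar>x j\<bar> ^ q) powr (1 / real q)"

definition zspan :: "nat \<Rightarrow> (nat \<Rightarrow> nat \<Rightarrow> real) \<Rightarrow> (nat \<Rightarrow> real) set" where
  "zspan m g = {(\<lambda>j. \<Sum>i<m. real_of_int (c i) * g i j) | c. True}"

definition lin_indep :: "nat \<Rightarrow> (nat \<Rightarrow> nat \<Rightarrow> real) \<Rightarrow> bool" where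
  "lin_indep m b \<longleftrightarrow> (\<forall>c::nat \<Rightarrow> real.
      (\<lambda>j. \<Sum>i<m. c i * b i j) = (\<lambda>j. 0) \<longrightarrow> (\<forall>i<m. c i = 0))"

definition is_basis :: "nat \<Rightarrow> (nat \<Rightarrow> real) set \<Rightarrow> (nat \<Rightarrow> nat \<Rightarrow> real) \<Rightarrow> bool" where
  "is_basis m L b \<longleftrightarrow> lin_indep m b \<and> zspan m b = L"

definition uvec :: "nat \<Rightarrow> (nat \<Rightarrow> int) \<Rightarrow> nat \<Rightarrow> real" where
  "uvec n s j = (if j = 0 then 1 else if j < n then real_of_int (s j) else 0)"

definition Wvec :: "nat \<Rightarrow> nat \<Rightarrow> nat \<Rightarrow> nat \<Rightarrow> real" where
  "Wvec p n i j = (if j = i \<and> j < n then real p else 0)"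

definition Lplus :: "nat \<Rightarrow> nat \<Rightarrow> (nat \<Rightarrow> int) \<Rightarrow> (nat \<Rightarrow> real) set" where
  "Lplus p n s = zspan (Suc n) (\<lambda>i. if i < n then Wvec p n i else uvec n s)"

definition vvec :: "nat \<Rightarrow> nat \<Rightarrow> real \<Rightarrow> nat \<Rightarrow> nat \<Rightarrow> real" where
  "vvec p n e i j = (if j < n then Wvec p n i j
                     else if j = n then (if i = 0 then e else 2 * e) else 0)"

definition utilde :: "nat \<Rightarrow> nat \<Rightarrow> (nat \<Rightarrow> int) \<Rightarrow> real \<Rightarrow> nat \<Rightarrow> real" where
  "utilde p n s e j = (1 / real p) * (\<Sum>i<n. uvec n s i * vvec p n e i j)"

definition Ltilde :: "nat \<Rightarrow> nat \<Rightarrow> (nat \<Rightarrow> int) \<Rightarrow> real \<Rightarrow> (nat \<Rightarrow> real) set" where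
  "Ltilde p n s e = zspan (Suc n) (\<lambda>i. if i < n then vvec p n e i else utilde p n s e)"

definition basis_cost :: "nat \<Rightarrow> nat \<Rightarrow> nat \<Rightarrow> (nat \<Rightarrow> nat \<Rightarrow> real) \<Rightarrow> real" where
  "basis_cost q q' n b = (\<Sum>i<n. lq_norm q (Suc n) (b i) ^ q')"

end

theory Submission
  imports Defs
begin

lemma vvec_lt: "j < n \<Longrightarrow> vvec p n e i j = (if j = i then real p else 0)"
  by (simp add: vvec_def Wvec_def)
lemma vvec_n: "vvec p n e i n = (if i = 0 then e else 2 * e)"
  by (simp add: vvec_def)
lemma vvec_gt: "j > n \<Longrightarrow> vvec p n e i j = 0"
  by (simp add: vvec_def)

lemma utilde_lt: assumes "p > 0" "j < n" shows "utilde p n s e j = uvec n s j"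
proof -
  have "(\<Sum>i<n. uvec n s i * vvec p n e i j) = (\<Sum>i<n. if i = j then uvec n s j * real p else 0)"
    by (rule sum.cong) (auto simp: vvec_lt assms)
  also have "\<dots> = uvec n s j * real p" using assms by simp
  finally show ?thesis using assms by (simp add: utilde_def)
qed

lemma utilde_gt: "j > n \<Longrightarrow> utilde p n s e j = 0"
  by (simp add: utilde_def vvec_gt)

lemma utilde_n: assumes "p > 0" "n \<ge> 1"
  shows "utilde p n s e n = e / real p * (1 + 2 * (\<Sum>j\<in>{1..<n}. real_of_int (s j)))"
proof -
  have eq: "{..<n} = insert 0 {1..<n}" using assms by auto
  have "(\<Sum>i<n. uvec n s i * vvec p n e i n) = e + (\<Sum>i\<in>{1..<n}. real_of_int (s i) * (2 * e))"
    unfolding eq by (subst sum.insert) (auto simp: vvec_n uvec_def intro!: sum.cong)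
  also have "\<dots> = e * (1 + 2 * (\<Sum>j\<in>{1..<n}. real_of_int (s j)))"
    by (simp add: sum_distrib_left sum_distrib_right algebra_simps)
  finally show ?thesis by (simp add: utilde_def)
qed



lemma zspanI: "x = (\<lambda>j. \<Sum>i<m. real_of_int (c i) * g i j) \<Longrightarrow> x \<in> zspan m g"
  unfolding zspan_def by auto

lemma zspan_gen: "i < m \<Longrightarrow> g i \<in> zspan m g"
proof -
  assume i: "i < m"
  have "g i = (\<lambda>j. \<Sum>k<m. real_of_int (if k = i then 1 else 0) * g k j)"
  proof
    fix j
    have "(\<Sum>k<m. real_of_int (if k = i then 1 else 0) * g k j) = (\<Sum>k<m. if k = i then g k j else 0)"
      by (rule sum.cong) auto
    thus "g i j = (\<Sum>k<m. real_of_int (if k = i then 1 else 0) * g k j)" using i by simp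
  qed
  thus ?thesis by (rule zspanI)
qed

lemma zspan_zero: "(\<lambda>j. 0) \<in> zspan m g"
proof -
  have "(\<lambda>j. 0::real) = (\<lambda>j. \<Sum>k<m. real_of_int 0 * g k j)" by simp
  thus ?thesis by (rule zspanI)
qed

lemma zspan_neg: "x \<in> zspan m g \<Longrightarrow> (\<lambda>j. - x j) \<in> zspan m g"
proof -
  assume "x \<in> zspan m g"
  then obtain c where c: "x = (\<lambda>j. \<Sum>i<m. real_of_int (c i) * g i j)" unfolding zspan_def by blast
  have "(\<lambda>j. - x j) = (\<lambda>j. \<Sum>i<m. real_of_int (- c i) * g i j)"
    unfolding c by (simp add: sum_negf[symmetric])
  thus ?thesis by (rule zspanI)
qed

lemma zspan_sub:
  assumes h: "\<forall>i<m. h i \<in> zspan m' g"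
  shows "zspan m h \<subseteq> zspan m' g"
proof
  fix x assume "x \<in> zspan m h"
  then obtain c where c: "x = (\<lambda>j. \<Sum>i<m. real_of_int (c i) * h i j)" unfolding zspan_def by blast
  have "\<forall>i. \<exists>d. i < m \<longrightarrow> h i = (\<lambda>j. \<Sum>k<m'. real_of_int (d k) * g k j)"
    using h unfolding zspan_def by blast
  then obtain d where d: "\<And>i. i < m \<Longrightarrow> h i = (\<lambda>j. \<Sum>k<m'. real_of_int (d i k) * g k j)"
    by metis
  have "x = (\<lambda>j. \<Sum>k<m'. real_of_int (\<Sum>i<m. c i * d i k) * g k j)"
  proof
    fix j
    have "x j = (\<Sum>i<m. real_of_int (c i) * (\<Sum>k<m'. real_of_int (d i k) * g k j))"
      unfolding c using d by simp
    also have "\<dots> = (\<Sum>i<m. \<Sum>k<m'. real_of_int (c i) * real_of_int (d i k) * g k j)"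
      by (simp add: sum_distrib_left mult.assoc)
    also have "\<dots> = (\<Sum>k<m'. \<Sum>i<m. real_of_int (c i) * real_of_int (d i k) * g k j)"
      by (rule sum.swap)
    also have "\<dots> = (\<Sum>k<m'. real_of_int (\<Sum>i<m. c i * d i k) * g k j)"
      by (simp add: sum_distrib_right)
    finally show "x j = \<dots>" .
  qed
  thus "x \<in> zspan m' g" by (rule zspanI)
qed

lemma zspan_inv:
  assumes "\<forall>i<m. \<exists>z::int. g i j1 - t * g i j0 = real_of_int z * cc"
    and "x \<in> zspan m g"
  shows "\<exists>z::int. x j1 - t * x j0 = real_of_int z * cc"
proof -
  obtain c where c: "x = (\<lambda>j. \<Sum>i<m. real_of_int (c i) * g i j)" using assms(2) unfolding zspan_def by blast
  have "\<forall>i. \<exists>z::int. i < m \<longrightarrow> g i j1 - t * g i j0 = real_of_int z * cc" using assms(1) by blast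
  then obtain Z where Z: "\<And>i. i < m \<Longrightarrow> g i j1 - t * g i j0 = real_of_int (Z i) * cc" by metis
  have "x j1 - t * x j0 = (\<Sum>i<m. real_of_int (c i) * (g i j1 - t * g i j0))"
    unfolding c by (simp add: sum_subtractf sum_distrib_left algebra_simps)
  also have "\<dots> = (\<Sum>i<m. real_of_int (c i) * (real_of_int (Z i) * cc))"
    using Z by simp
  also have "\<dots> = real_of_int (\<Sum>i<m. c i * Z i) * cc"
    by (simp add: sum_distrib_right mult.assoc)
  finally show ?thesis by blast
qed

lemma zspan_lin:
  assumes "\<forall>i<m. g i n = a * g i 0 + b * (\<Sum>j\<in>A. g i j)"
    and "\<forall>i<m. \<forall>j>n. g i j = 0"
    and "x \<in> zspan m g"
  shows "x n = a * x 0 + b * (\<Sum>j\<in>A. x j) \<and> (\<forall>j>n. x j = 0)"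
proof -
  obtain c where c: "x = (\<lambda>j. \<Sum>i<m. real_of_int (c i) * g i j)" using assms(3) unfolding zspan_def by blast
  have "x n = (\<Sum>i<m. real_of_int (c i) * (a * g i 0 + b * (\<Sum>j\<in>A. g i j)))"
    unfolding c using assms(1) by simp
  also have "\<dots> = a * x 0 + b * (\<Sum>j\<in>A. x j)"
    unfolding c by (simp add: algebra_simps sum.distrib sum_distrib_left sum.swap[of _ A])
  finally show ?thesis using assms(2) c by simp
qed

lemma zspan_proj:
  assumes "\<forall>i<m. \<forall>j<n. g i j = h i j" and "\<forall>i<m. \<forall>j\<ge>n. h i j = 0"
    and "x \<in> zspan m g"
  shows "(\<lambda>j. if j < n then x j else 0) \<in> zspan m h"
proof -
  obtain c where c: "x = (\<lambda>j. \<Sum>i<m. real_of_int (c i) * g i j)" using assms(3) unfolding zspan_def by blast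
  have "(\<lambda>j. if j < n then x j else 0) = (\<lambda>j. \<Sum>i<m. real_of_int (c i) * h i j)"
    using assms(1,2) unfolding c by (auto intro!: sum.cong)
  thus ?thesis by (rule zspanI)
qed



lemma Lt_gens: "Ltilde p n s e = zspan (Suc n) (\<lambda>i. if i < n then vvec p n e i else utilde p n s e)"
  by (simp add: Ltilde_def)

lemma V_in: "i < n \<Longrightarrow> vvec p n e i \<in> Ltilde p n s e"
  unfolding Ltilde_def using zspan_gen[of i "Suc n" "\<lambda>i. if i < n then vvec p n e i else utilde p n s e"] by simp

lemma U_in: "utilde p n s e \<in> Ltilde p n s e"
  unfolding Ltilde_def using zspan_gen[of n "Suc n" "\<lambda>i. if i < n then vvec p n e i else utilde p n s e"] by simp

lemma sum_delta_real: "(\<Sum>j\<in>A. if j = i then (c::real) else 0) = (if i \<in> A \<and> finite A then c else 0)"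
  by (cases "finite A") (auto)

lemma Lt_struct:
  assumes p: "p > 0" and n: "n \<ge> 1" and x: "x \<in> Ltilde p n s e"
  shows "x n = e / real p * x 0 + 2 * e / real p * (\<Sum>j\<in>{1..<n}. x j) \<and> (\<forall>j>n. x j = 0)"
proof -
  let ?g = "\<lambda>i. if i < n then vvec p n e i else utilde p n s e"
  have A: "\<forall>i<Suc n. ?g i n = e / real p * ?g i 0 + 2 * e / real p * (\<Sum>j\<in>{1..<n}. ?g i j)"
  proof (intro allI impI)
    fix i assume i: "i < Suc n"
    show "?g i n = e / real p * ?g i 0 + 2 * e / real p * (\<Sum>j\<in>{1..<n}. ?g i j)"
    proof (cases "i < n")
      case True
      have "(\<Sum>j\<in>{1..<n}. vvec p n e i j) = (\<Sum>j\<in>{1..<n}. if j = i then real p else 0)"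
        by (rule sum.cong) (auto simp: vvec_lt)
      also have "\<dots> = (if i \<ge> 1 then real p else 0)" using True by (simp add: sum_delta_real)
      finally show ?thesis using True n p by (auto simp: vvec_lt vvec_n)
    next
      case False
      hence i: "i = n" using i by simp
      have "(\<Sum>j\<in>{1..<n}. utilde p n s e j) = (\<Sum>j\<in>{1..<n}. real_of_int (s j))"
        by (rule sum.cong) (auto simp: utilde_lt p uvec_def)
      moreover have "utilde p n s e 0 = 1" using n p by (simp add: utilde_lt uvec_def)
      ultimately show ?thesis using i p n by (simp add: utilde_n algebra_simps)
    qed
  qed
  have B: "\<forall>i<Suc n. \<forall>j>n. ?g i j = 0" by (simp add: vvec_gt utilde_gt)
  show ?thesis using zspan_lin[OF A B] x unfolding Ltilde_def by blast
qed

lemma Lt_eq: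
  assumes p: "p > 0" and n: "n \<ge> 1" and x: "x \<in> Ltilde p n s e" and y: "y \<in> Ltilde p n s e"
    and eq: "\<forall>j<n. x j = y j"
  shows "x = y"
proof
  fix j
  have s: "(\<Sum>j\<in>{1..<n}. x j) = (\<Sum>j\<in>{1..<n}. y j)" using eq by (intro sum.cong) auto
  show "x j = y j"
    using Lt_struct[OF p n x] Lt_struct[OF p n y] eq s n
    by (cases "j < n"; cases "j = n") auto
qed

lemma Lt_proj:
  assumes p: "p > 0" and n: "n \<ge> 1" and x: "x \<in> Ltilde p n s e"
  shows "(\<lambda>j. if j < n then x j else 0) \<in> Lplus p n s"
proof -
  let ?g = "\<lambda>i. if i < n then vvec p n e i else utilde p n s e"
  let ?h = "\<lambda>i. if i < n then Wvec p n i else uvec n s"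
  have A: "\<forall>i<Suc n. \<forall>j<n. ?g i j = ?h i j"
  proof (intro allI impI)
    fix i j assume "i < Suc n" "j < n"
    thus "?g i j = ?h i j" using utilde_lt[OF p \<open>j < n\<close>, of s e] by (simp add: vvec_def)
  qed
  have B: "\<forall>i<Suc n. \<forall>j\<ge>n. ?h i j = 0" using n by (auto simp: Wvec_def uvec_def)
  show ?thesis using zspan_proj[OF A B] x unfolding Ltilde_def Lplus_def by blast
qed



lemma lq_nonneg: "0 \<le> lq_norm q m x"
  by (simp add: lq_norm_def)

lemma lq_pow: assumes q: "q \<ge> 1" shows "lq_norm q m x ^ q = (\<Sum>j<m. \<bar>x j\<bar> ^ q)"
proof -
  let ?S = "(\<Sum>j<m. \<bar>x j\<bar> ^ q)"
  have S: "?S \<ge> 0" by (intro sum_nonneg) auto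
  show ?thesis
  proof (cases "?S = 0")
    case True thus ?thesis using q by (simp add: lq_norm_def)
  next
    case False
    hence Sp: "?S > 0" using S by simp
    have "lq_norm q m x ^ q = (?S powr (1 / real q)) powr (real q)"
      unfolding lq_norm_def using Sp by (simp add: powr_realpow)
    also have "\<dots> = ?S" using q S by (simp add: powr_powr)
    finally show ?thesis .
  qed
qed

lemma lq_cong: "(\<forall>j<m. x j = y j) \<Longrightarrow> lq_norm q m x = lq_norm q m y"
  unfolding lq_norm_def by (metis (no_types, lifting) lessThan_iff sum.cong)

lemma lq_neg: "lq_norm q m (\<lambda>j. - x j) = lq_norm q m x"
  by (simp add: lq_norm_def)

lemma lq_le_pow: assumes q: "q \<ge> 1" and le: "lq_norm q m x ^ q \<le> lq_norm q m' y ^ q"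
  shows "lq_norm q m x \<le> lq_norm q m' y"
proof -
  obtain k where k: "q = Suc k" using q by (cases q) auto
  show ?thesis using power_le_imp_le_base[OF le[unfolded k] lq_nonneg] k by simp
qed

lemma lq_Suc: assumes q: "q \<ge> 1"
  shows "lq_norm q (Suc n) x ^ q = lq_norm q n x ^ q + \<bar>x n\<bar> ^ q"
  using q by (simp add: lq_pow)

lemma lq_Suc_ge: assumes q: "q \<ge> 1" shows "lq_norm q n x \<le> lq_norm q (Suc n) x"
  by (rule lq_le_pow[OF q]) (simp add: lq_Suc[OF q])

lemma lq_eq_of_pow: assumes q: "q \<ge> 1" and h: "lq_norm q m x ^ q = a ^ q" and a: "a \<ge> 0"
  shows "lq_norm q m x = a"
  using power_eq_imp_eq_base[OF h lq_nonneg a] q by simp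

lemma lq_W: assumes q: "q \<ge> 1" and i: "i < n" shows "lq_norm q n (Wvec p n i) = real p"
proof (rule lq_eq_of_pow[OF q])
  have "(\<Sum>j<n. \<bar>Wvec p n i j\<bar> ^ q) = (\<Sum>j<n. if j = i then real p ^ q else 0)"
    by (rule sum.cong) (use q in \<open>auto simp: Wvec_def\<close>)
  also have "\<dots> = real p ^ q" using i by simp
  finally show "lq_norm q n (Wvec p n i) ^ q = real p ^ q" by (simp add: lq_pow[OF q])
qed simp

lemma lq_u: assumes q: "q \<ge> 1" and n: "n \<ge> 1"
  and s_vals: "\<forall>i\<in>{1..n-1}. s i = 2 \<or> s i = 3"
  and s_sum: "(\<Sum>i=1..n-1. s i ^ q) = int p ^ q - 1"
  shows "lq_norm q n (uvec n s) = real p"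
proof (rule lq_eq_of_pow[OF q])
  have eq: "{..<n} = insert 0 {1..<n}" using n by auto
  have eq2: "{1..<n} = {1..n-1}" using n by auto
  have "(\<Sum>j<n. \<bar>uvec n s j\<bar> ^ q) = 1 + (\<Sum>j\<in>{1..<n}. real_of_int (s j) ^ q)"
    unfolding eq
  proof (subst sum.insert)
    have "(\<Sum>j\<in>{1..<n}. \<bar>uvec n s j\<bar> ^ q) = (\<Sum>j\<in>{1..<n}. real_of_int (s j) ^ q)"
    proof (rule sum.cong)
      fix j assume j: "j \<in> {1..<n}"
      hence "s j = 2 \<or> s j = 3" using s_vals eq2 by auto
      hence "\<bar>real_of_int (s j)\<bar> = real_of_int (s j)" by auto
      thus "\<bar>uvec n s j\<bar> ^ q = real_of_int (s j) ^ q" using j by (simp add: uvec_def)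
    qed simp
    thus "\<bar>uvec n s 0\<bar> ^ q + (\<Sum>j\<in>{1..<n}. \<bar>uvec n s j\<bar> ^ q) = 1 + (\<Sum>j\<in>{1..<n}. real_of_int (s j) ^ q)"
      using n by (simp add: uvec_def)
  qed auto
  also have "(\<Sum>j\<in>{1..<n}. real_of_int (s j) ^ q) = real p ^ q - 1"
  proof -
    have "real_of_int (\<Sum>i=1..n-1. s i ^ q) = real_of_int (int p ^ q - 1)" using s_sum by simp
    thus ?thesis unfolding eq2 by simp
  qed
  finally show "lq_norm q n (uvec n s) ^ q = real p ^ q" by (simp add: lq_pow[OF q])
qed simp



locale setting =
  fixes q p n :: nat and s :: "nat \<Rightarrow> int" and R :: real
  assumes q: "q \<ge> 1" and p7: "p \<ge> 7" and n2: "n \<ge> 2"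
    and s_vals: "\<forall>i\<in>{1..n-1}. s i = 2 \<or> s i = 3"
    and s_sum: "(\<Sum>i=1..n-1. s i ^ q) = int p ^ q - 1"
    and q_ge2: "q \<ge> 2 \<longrightarrow> 4 * n - 3 > 2 * p"
    and R_gt: "R > real p"
    and R_ball: "Lplus p n s \<inter> {x. lq_norm q n x < R} =
       {(\<lambda>j. 0), uvec n s, (\<lambda>j. - uvec n s j)} \<union>
       (\<Union>i<n. {Wvec p n i, (\<lambda>j. - Wvec p n i j)})"
begin

lemma p0: "p > 0" using p7 by simp
lemma n1: "n \<ge> 1" using n2 by simp

lemma zero_in: "(\<lambda>j. 0) \<in> Ltilde p n s e"
  unfolding Ltilde_def by (rule zspan_zero)

lemma neg_in: "x \<in> Ltilde p n s e \<Longrightarrow> (\<lambda>j. - x j) \<in> Ltilde p n s e"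
  unfolding Ltilde_def by (rule zspan_neg)

lemma lqU: "lq_norm q n (utilde p n s e) = real p"
proof -
  have "lq_norm q n (utilde p n s e) = lq_norm q n (uvec n s)"
    by (rule lq_cong) (simp add: utilde_lt[OF p0])
  thus ?thesis using lq_u[OF q n1 s_vals s_sum] by simp
qed

lemma lqV: "i < n \<Longrightarrow> lq_norm q n (vvec p n e i) = real p"
proof -
  assume i: "i < n"
  have "lq_norm q n (vvec p n e i) = lq_norm q n (Wvec p n i)"
    by (rule lq_cong) (simp add: vvec_def)
  thus ?thesis using lq_W[OF q i] by simp
qed

lemma classify:
  assumes x: "x \<in> Ltilde p n s e" and nz: "x \<noteq> (\<lambda>j. 0)" and lt: "lq_norm q n x < R"
  shows "x = utilde p n s e \<or> x = (\<lambda>j. - utilde p n s e j) \<or>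
         (\<exists>i<n. x = vvec p n e i \<or> x = (\<lambda>j. - vvec p n e i j))"
proof -
  define y where "y = (\<lambda>j. if j < n then x j else 0)"
  have yL: "y \<in> Lplus p n s" unfolding y_def by (rule Lt_proj[OF p0 n1 x])
  have ny: "lq_norm q n y = lq_norm q n x" by (rule lq_cong) (simp add: y_def)
  have yx: "\<And>j. j < n \<Longrightarrow> y j = x j" by (simp add: y_def)
  have ynz: "y \<noteq> (\<lambda>j. 0)"
  proof
    assume "y = (\<lambda>j. 0)"
    hence "\<forall>j<n. x j = (\<lambda>j. 0::real) j" using yx by (metis)
    hence "x = (\<lambda>j. 0)" by (intro Lt_eq[OF p0 n1 x zero_in]) 
    thus False using nz by simp
  qed
  have "y \<in> Lplus p n s \<inter> {x. lq_norm q n x < R}" using yL ny lt by simp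
  hence ys: "y = uvec n s \<or> y = (\<lambda>j. - uvec n s j) \<or> (\<exists>i<n. y = Wvec p n i \<or> y = (\<lambda>j. - Wvec p n i j))"
    using ynz unfolding R_ball by blast
  have U: "\<And>j. j < n \<Longrightarrow> utilde p n s e j = uvec n s j" by (simp add: utilde_lt[OF p0])
  have V: "\<And>i j. j < n \<Longrightarrow> vvec p n e i j = Wvec p n i j" by (simp add: vvec_def)
  show ?thesis
  proof (rule disjE[OF ys])
    assume "y = uvec n s"
    hence "x = utilde p n s e" using yx U by (intro Lt_eq[OF p0 n1 x U_in]) auto
    thus ?thesis by simp
  next
    assume "y = (\<lambda>j. - uvec n s j) \<or> (\<exists>i<n. y = Wvec p n i \<or> y = (\<lambda>j. - Wvec p n i j))"
    thus ?thesis
    proof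
      assume "y = (\<lambda>j. - uvec n s j)"
      hence "x = (\<lambda>j. - utilde p n s e j)" using yx U by (intro Lt_eq[OF p0 n1 x neg_in[OF U_in]]) auto
      thus ?thesis by simp
    next
      assume "\<exists>i<n. y = Wvec p n i \<or> y = (\<lambda>j. - Wvec p n i j)"
      then obtain i where i: "i < n" and yi: "y = Wvec p n i \<or> y = (\<lambda>j. - Wvec p n i j)" by blast
      from yi show ?thesis
      proof
        assume "y = Wvec p n i"
        hence "x = vvec p n e i" using yx V by (intro Lt_eq[OF p0 n1 x V_in[OF i]]) auto
        thus ?thesis using i by blast
      next
        assume "y = (\<lambda>j. - Wvec p n i j)"
        hence "x = (\<lambda>j. - vvec p n e i j)" using yx V by (intro Lt_eq[OF p0 n1 x neg_in[OF V_in[OF i]]]) auto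
        thus ?thesis using i by blast
      qed
    qed
  qed
qed

lemma ge_p:
  assumes x: "x \<in> Ltilde p n s e" and nz: "x \<noteq> (\<lambda>j. 0)"
  shows "lq_norm q n x \<ge> real p"
proof (cases "lq_norm q n x < R")
  case True
  from classify[OF x nz True] show ?thesis
    using lqU lqV by (auto simp: lq_neg)
next
  case False thus ?thesis using R_gt by simp
qed

end


lemma pow_add_le: assumes "(a::real) \<ge> 0" "b \<ge> 0" "q \<ge> 1" shows "a ^ q + b ^ q \<le> (a + b) ^ q"
proof -
  obtain k where k: "q = Suc k" using assms(3) by (cases q) auto
  have "a ^ k \<le> (a + b) ^ k" "b ^ k \<le> (a + b) ^ k" using assms by (auto intro!: power_mono)
  hence "a * a ^ k + b * b ^ k \<le> a * (a + b) ^ k + b * (a + b) ^ k"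
    using assms by (intro add_mono mult_left_mono) auto
  thus ?thesis unfolding k by (simp add: algebra_simps)
qed

context setting begin

definition T where "T = (\<Sum>j\<in>{1..<n}. real_of_int (s j))"

lemma T_ge: "1 + 2 * T \<ge> real p"
proof (cases "q = 1")
  case True
  have eq2: "{1..<n} = {1..n-1}" using n1 by auto
  have "real_of_int (\<Sum>i=1..n-1. s i) = real_of_int (int p - 1)" using s_sum True by simp
  hence "T = real p - 1" unfolding T_def eq2 using p0 by (simp add: of_nat_diff)
  thus ?thesis using p0 by simp
next
  case False
  hence q2: "q \<ge> 2" using q by simp
  have "T \<ge> (\<Sum>j\<in>{1..<n}. 2)" unfolding T_def
  proof (rule sum_mono)
    fix j assume "j \<in> {1..<n}"
    hence "s j = 2 \<or> s j = 3" using s_vals by auto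
    thus "2 \<le> real_of_int (s j)" by auto
  qed
  hence "T \<ge> 2 * (real n - 1)" using n1 by (simp add: of_nat_diff)
  moreover have "4 * n - 3 > 2 * p" using q_ge2 q2 by simp
  hence "4 * real n - 3 > 2 * real p" using n2 by linarith
  moreover have "real p \<ge> 0" by simp
  ultimately show ?thesis by (simp add: algebra_simps)
qed

lemma Un_eq: "utilde p n s e n = e / real p * (1 + 2 * T)"
  unfolding T_def by (rule utilde_n[OF p0 n1])

lemma Un_ge: "e > 0 \<Longrightarrow> \<bar>utilde p n s e n\<bar> \<ge> e"
proof -
  assume e: "e > 0"
  have "e / real p * (1 + 2 * T) \<ge> e / real p * real p"
    using T_ge e p0 by (intro mult_left_mono) auto
  hence "e \<le> e / real p * (1 + 2 * T)" using p0 by simp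
  thus ?thesis unfolding Un_eq by linarith
qed

lemma lqS: "x \<in> Ltilde p n s e \<Longrightarrow> lq_norm q (Suc n) x ^ q = lq_norm q n x ^ q + \<bar>x n\<bar> ^ q"
  by (rule lq_Suc[OF q])

lemma shortest:
  assumes e: "e > 0" "e < R - real p"
    and x: "x \<in> Ltilde p n s e" and nz: "x \<noteq> (\<lambda>j. 0)"
  shows "lq_norm q (Suc n) (vvec p n e 0) \<le> lq_norm q (Suc n) x"
proof (rule lq_le_pow[OF q])
  have n0: "0 < n" using n1 by simp
  have V0: "lq_norm q (Suc n) (vvec p n e 0) ^ q = real p ^ q + e ^ q"
    using lq_Suc[OF q, of n "vvec p n e 0"] lqV[OF n0, of e] e by (simp add: vvec_n)
  show "lq_norm q (Suc n) (vvec p n e 0) ^ q \<le> lq_norm q (Suc n) x ^ q"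
  proof (cases "lq_norm q n x < R")
    case True
    have ge: "\<bar>x n\<bar> \<ge> e"
      using classify[OF x nz True] Un_ge[OF e(1)] e(1) by (auto simp: vvec_n)
    have "lq_norm q n x = real p"
      using classify[OF x nz True] lqU lqV by (auto simp: lq_neg)
    moreover have "e ^ q \<le> \<bar>x n\<bar> ^ q" using ge e by (intro power_mono) auto
    ultimately show ?thesis using V0 lq_Suc[OF q, of n x] by simp
  next
    case False
    have "real p ^ q + e ^ q \<le> (real p + e) ^ q" using e q by (intro pow_add_le) auto
    also have "\<dots> \<le> R ^ q" using e by (intro power_mono) auto
    also have "\<dots> \<le> lq_norm q n x ^ q" using False R_gt by (intro power_mono) auto
    also have "\<dots> \<le> lq_norm q (Suc n) x ^ q" using lq_Suc_ge[OF q] lq_nonneg by (intro power_mono) auto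
    finally show ?thesis using V0 by simp
  qed
qed

end


context setting begin

definition b0 where "b0 e = (\<lambda>k. if k = 0 then utilde p n s e else vvec p n e k)"

lemma b0_sum:
  assumes j: "j < n"
  shows "(\<Sum>k<n. d k * b0 e k j) = d 0 * uvec n s j + (if 1 \<le> j then d j * real p else 0)"
proof -
  have eq: "{..<n} = insert 0 {1..<n}" using n1 by auto
  have "(\<Sum>k\<in>{1..<n}. d k * b0 e k j) = (\<Sum>k\<in>{1..<n}. if k = j then d j * real p else 0)"
    by (rule sum.cong) (auto simp: b0_def vvec_lt j)
  also have "\<dots> = (if 1 \<le> j then d j * real p else 0)" using j by (simp add: sum_delta_real)
  finally show ?thesis unfolding eq using j by (simp add: b0_def utilde_lt[OF p0])
qed

lemma b0_in: "k < n \<Longrightarrow> b0 e k \<in> Ltilde p n s e"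
  by (simp add: b0_def U_in V_in)

lemma b0_indep: "lin_indep n (b0 e)"
  unfolding lin_indep_def
proof (intro allI impI)
  fix c :: "nat \<Rightarrow> real" and k
  assume h: "(\<lambda>j. \<Sum>i<n. c i * b0 e i j) = (\<lambda>j. 0)" and k: "k < n"
  have hj: "\<And>j. j < n \<Longrightarrow> c 0 * uvec n s j + (if 1 \<le> j then c j * real p else 0) = 0"
    using h b0_sum by (metis)
  have c0: "c 0 = 0" using hj[of 0] n1 by (simp add: uvec_def)
  show "c k = 0"
  proof (cases "k = 0")
    case True thus ?thesis using c0 by simp
  next
    case False thus ?thesis using hj[OF k] c0 p0 by simp
  qed
qed

lemma b0_span: "zspan n (b0 e) = Ltilde p n s e"
proof
  show sub: "zspan n (b0 e) \<subseteq> Ltilde p n s e"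
    unfolding Ltilde_def by (rule zspan_sub) (simp add: b0_in[unfolded Ltilde_def])
  show "Ltilde p n s e \<subseteq> zspan n (b0 e)"
    unfolding Ltilde_def
  proof (rule zspan_sub, intro allI impI)
    fix i assume i: "i < Suc n"
    show "(if i < n then vvec p n e i else utilde p n s e) \<in> zspan n (b0 e)"
    proof (cases "i < n")
      case False
      hence "(if i < n then vvec p n e i else utilde p n s e) = b0 e 0" by (simp add: b0_def)
      thus ?thesis using zspan_gen[of 0 n "b0 e"] n1 by simp
    next
      case True
      show ?thesis
      proof (cases "i = 0")
        case False
        hence "(if i < n then vvec p n e i else utilde p n s e) = b0 e i" using True by (simp add: b0_def)
        thus ?thesis using zspan_gen[of i n "b0 e"] True by simp
      next
        case i0: True
        define c where "c = (\<lambda>k. if k = 0 then int p else - s k)"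
        define w where "w = (\<lambda>j. \<Sum>k<n. real_of_int (c k) * b0 e k j)"
        have wz: "w \<in> zspan n (b0 e)" unfolding w_def by (rule zspanI[OF refl])
        have wL: "w \<in> Ltilde p n s e" using wz sub by blast
        have "vvec p n e 0 = w"
        proof (rule Lt_eq[OF p0 n1 V_in[OF True[unfolded i0]] wL], intro allI impI)
          fix j assume j: "j < n"
          show "vvec p n e 0 j = w j"
            unfolding w_def b0_sum[OF j] using j by (auto simp: c_def uvec_def vvec_lt)
        qed
        thus ?thesis using wz i0 True by simp
      qed
    qed
  qed
qed

lemma b0_basis: "is_basis n (Ltilde p n s e) (b0 e)"
  unfolding is_basis_def using b0_indep b0_span by simp

end


lemma basis_mem: "is_basis m L b \<Longrightarrow> k < m \<Longrightarrow> b k \<in> L"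
  unfolding is_basis_def using zspan_gen by blast

lemma basis_nz: assumes "is_basis m L b" "k < m" shows "b k \<noteq> (\<lambda>j. 0)"
proof
  assume bk: "b k = (\<lambda>j. 0)"
  let ?c = "\<lambda>i. if i = k then 1 else (0::real)"
  have "(\<lambda>j. \<Sum>i<m. ?c i * b i j) = (\<lambda>j. 0)"
  proof
    fix j
    have "(\<Sum>i<m. ?c i * b i j) = (\<Sum>i<m. if i = k then b k j else 0)" by (rule sum.cong) auto
    also have "\<dots> = 0" using bk by simp
    finally show "(\<Sum>i<m. ?c i * b i j) = 0" .
  qed
  have ind: "lin_indep m b" using assms(1) unfolding is_basis_def by simp
  have "?c k = 0" by (rule ind[unfolded lin_indep_def, rule_format, OF \<open>(\<lambda>j. \<Sum>i<m. ?c i * b i j) = (\<lambda>j. 0)\<close> assms(2)])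
  thus False by simp
qed

lemma absV: "y = vvec p n e j \<or> y = (\<lambda>m. - vvec p n e j m) \<Longrightarrow> m < n \<Longrightarrow> \<bar>y m\<bar> = (if m = j then real p else 0)"
  by (auto simp: vvec_lt)

context setting begin

lemma absU: "y = utilde p n s e \<or> y = (\<lambda>m. - utilde p n s e m) \<Longrightarrow> m < n \<Longrightarrow> \<bar>y m\<bar> = \<bar>uvec n s m\<bar>"
  by (auto simp: utilde_lt[OF p0])

lemma int_one: "real_of_int z * real_of_int a = 1 \<Longrightarrow> a = 2 \<or> a = 3 \<or> a = int p \<Longrightarrow> False"
proof -
  assume h: "real_of_int z * real_of_int a = 1" and a: "a = 2 \<or> a = 3 \<or> a = int p"
  have "z * a = 1" using h by (metis of_int_eq_1_iff of_int_mult)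
  hence "a dvd 1" by (metis dvd_triv_right)
  thus False using a p7 by auto
qed

lemma big:
  assumes b: "is_basis n (Ltilde p n s e) b" and i0: "i0 < n"
    and bi0: "b i0 = vvec p n e 0 \<or> b i0 = (\<lambda>j. - vvec p n e 0 j)"
  shows "\<exists>k<n. lq_norm q (Suc n) (b k) \<ge> R"
proof (rule ccontr)
  assume "\<not> ?thesis"
  hence lt: "\<And>k. k < n \<Longrightarrow> lq_norm q (Suc n) (b k) < R" by force
  have mem: "\<And>k. k < n \<Longrightarrow> b k \<in> Ltilde p n s e" using basis_mem[OF b] .
  have cls: "\<And>k. k < n \<Longrightarrow> (b k = utilde p n s e \<or> b k = (\<lambda>j. - utilde p n s e j)) \<or>
         (\<exists>i<n. b k = vvec p n e i \<or> b k = (\<lambda>j. - vvec p n e i j))"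
  proof -
    fix k assume k: "k < n"
    have "lq_norm q n (b k) < R" using lt[OF k] lq_Suc_ge[OF q, of n "b k"] by linarith
    thus "?thesis k" using classify[OF mem[OF k] basis_nz[OF b k]] by blast
  qed
  have span: "zspan n b = Ltilde p n s e" using b unfolding is_basis_def by simp
  show False
  proof (cases "\<exists>k<n. b k = utilde p n s e \<or> b k = (\<lambda>j. - utilde p n s e j)")
    case False
    have "\<forall>k<n. \<exists>z::int. b k 0 - 0 * b k 0 = real_of_int z * real p"
    proof (intro allI impI)
      fix k assume k: "k < n"
      then obtain i where i: "i < n" and bk: "b k = vvec p n e i \<or> b k = (\<lambda>j. - vvec p n e i j)"
        using cls[OF k] False by blast
      show "\<exists>z::int. b k 0 - 0 * b k 0 = real_of_int z * real p"
        using bk n1 by (cases "i = 0") (auto simp: vvec_lt intro: exI[of _ 1] exI[of _ "-1"] exI[of _ 0])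
    qed
    from zspan_inv[of n b 0 0 0 "real p" "utilde p n s e", OF this] obtain z :: int where
      "utilde p n s e 0 - 0 * utilde p n s e 0 = real_of_int z * real p"
      using U_in span by blast
    hence "real_of_int z * real_of_int (int p) = 1" using n1 by (simp add: utilde_lt[OF p0] uvec_def)
    thus False using int_one by blast
  next
    case True
    then obtain k0 where k0: "k0 < n" and bk0: "b k0 = utilde p n s e \<or> b k0 = (\<lambda>j. - utilde p n s e j)" by blast
    have s1: "s 1 = 2 \<or> s 1 = 3" using s_vals n2 by auto
    have "i0 \<noteq> k0"
    proof
      assume "i0 = k0"
      hence "\<bar>b i0 1\<bar> = \<bar>uvec n s 1\<bar>" using absU[OF bk0] n2 by simp
      moreover have "\<bar>b i0 1\<bar> = 0" using absV[OF bi0, of 1] n2 by simp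
      ultimately show False using s1 n2 by (auto simp: uvec_def)
    qed
    define J where "J = {j\<in>{1..<n}. \<exists>k<n. b k = vvec p n e j \<or> b k = (\<lambda>m. - vvec p n e j m) }"
    define f where "f = (\<lambda>k. SOME j. j < n \<and> (b k = vvec p n e j \<or> b k = (\<lambda>m. - vvec p n e j m)))"
    have "J \<subseteq> f ` ({..<n} - {i0, k0})"
    proof
      fix j assume "j \<in> J"
      then obtain k where j: "j \<in> {1..<n}" and k: "k < n" and bk: "b k = vvec p n e j \<or> b k = (\<lambda>m. - vvec p n e j m)"
        unfolding J_def by auto
      have "k \<noteq> i0"
      proof
        assume "k = i0"
        hence "\<bar>b k 0\<bar> = real p" using absV[OF bi0, of 0] n1 by simp
        moreover have "\<bar>b k 0\<bar> = 0" using absV[OF bk, of 0] n1 j by simp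
        ultimately show False using p0 by simp
      qed
      moreover have "k \<noteq> k0"
      proof
        assume "k = k0"
        hence "\<bar>b k 0\<bar> = 1" using absU[OF bk0, of 0] n1 by (simp add: uvec_def)
        moreover have "\<bar>b k 0\<bar> = 0" using absV[OF bk, of 0] n1 j by simp
        ultimately show False by simp
      qed
      moreover have "f k = j"
      proof -
        have ex: "\<exists>j. j < n \<and> (b k = vvec p n e j \<or> b k = (\<lambda>m. - vvec p n e j m))" using bk j by auto
        have fk: "f k < n \<and> (b k = vvec p n e (f k) \<or> b k = (\<lambda>m. - vvec p n e (f k) m))"
          unfolding f_def by (rule someI_ex[OF ex])
        have "\<bar>b k j\<bar> = real p" using absV[OF bk, of j] j by simp
        moreover have "\<bar>b k j\<bar> = (if j = f k then real p else 0)" using absV[of "b k" p n e "f k" j] fk j by simp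
        ultimately show "f k = j" using p0 by (auto split: if_splits)
      qed
      ultimately show "j \<in> f ` ({..<n} - {i0, k0})" using k by auto
    qed
    hence "card J \<le> card ({..<n} - {i0, k0})" by (meson card_image_le finite_Diff finite_lessThan le_trans card_mono finite_imageI)
    also have "\<dots> = n - 2" using \<open>i0 \<noteq> k0\<close> i0 k0 by (simp add: card_Diff_subset)
    finally have cJ: "card J \<le> n - 2" .
    have "\<not> {1..<n} \<subseteq> J"
    proof
      assume "{1..<n} \<subseteq> J"
      hence "card {1..<n} \<le> card J" by (intro card_mono) (auto simp: J_def)
      thus False using cJ n2 by simp
    qed
    then obtain j where j: "j \<in> {1..<n}" and jJ: "j \<notin> J" by blast
    have sj: "s j = 2 \<or> s j = 3" using s_vals j by auto
    let ?t = "real_of_int (s j)" and ?c = "real_of_int (s j) * real p"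
    have "\<forall>k<n. \<exists>z::int. b k j - ?t * b k 0 = real_of_int z * ?c"
    proof (intro allI impI)
      fix k assume k: "k < n"
      show "\<exists>z::int. b k j - ?t * b k 0 = real_of_int z * ?c"
      proof (cases "b k = utilde p n s e \<or> b k = (\<lambda>j. - utilde p n s e j)")
        case True
        hence "b k j - ?t * b k 0 = 0" using j n1 by (auto simp: utilde_lt[OF p0] uvec_def)
        thus ?thesis by (intro exI[of _ 0]) simp
      next
        case False
        then obtain i where i: "i < n" and bk: "b k = vvec p n e i \<or> b k = (\<lambda>j. - vvec p n e i j)"
          using cls[OF k] by blast
        have "i \<noteq> j" using jJ j k bk unfolding J_def by auto
        hence "b k j = 0" using bk j by (auto simp: vvec_lt)
        show ?thesis
        proof (cases "i = 0")
          case True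
          thus ?thesis using bk \<open>b k j = 0\<close> n1
            by (auto simp: vvec_lt intro: exI[of _ 1] exI[of _ "-1"])
        next
          case False
          hence "b k 0 = 0" using bk n1 by (auto simp: vvec_lt)
          thus ?thesis using \<open>b k j = 0\<close> by (intro exI[of _ 0]) simp
        qed
      qed
    qed
    from zspan_inv[of n b j ?t 0 ?c "vvec p n e j", OF this] obtain z :: int where
      "vvec p n e j j - ?t * vvec p n e j 0 = real_of_int z * ?c"
      using V_in[of j n p e s] j span by auto
    hence "real_of_int z * real_of_int (s j) = 1" using j p0 by (simp add: vvec_lt)
    thus False using int_one sj by blast
  qed
qed

end


lemma pow_le_base: assumes "(q::nat) \<ge> 1" "(a::real) ^ q \<le> b ^ q" "0 \<le> b" shows "a \<le> b"
proof -
  obtain k where k: "q = Suc k" using assms(1) by (cases q) auto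
  show ?thesis using power_le_imp_le_base[of a k b] assms k by simp
qed

context setting begin

definition K where "K = 2 + (1 + 2 * T) / real p"
definition M where "M e = (real p ^ q + (K * e) ^ q) powr (1 / real q)"

lemma M_pow: "e \<ge> 0 \<Longrightarrow> M e ^ q = real p ^ q + (K * e) ^ q"
proof -
  assume e: "e \<ge> 0"
  have Kp: "K \<ge> 0" using T_ge p0 unfolding K_def by (simp add: field_simps)
  have pos: "real p ^ q + (K * e) ^ q > 0" using p0 Kp e by (simp add: add_pos_nonneg)
  have "M e ^ q = ((real p ^ q + (K * e) ^ q) powr (1 / real q)) powr (real q)"
    unfolding M_def using pos by (simp add: powr_realpow)
  also have "\<dots> = real p ^ q + (K * e) ^ q" using q pos by (simp add: powr_powr)
  finally show ?thesis .
qed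

lemma M_nonneg: "M e \<ge> 0" by (simp add: M_def)

lemma cost_upper:
  assumes e: "e > 0"
  shows "basis_cost q q' n (b0 e) \<le> real n * M e ^ q'"
proof -
  have TK: "(1 + 2 * T) / real p \<ge> 0" using T_ge p0 by simp
  have "\<forall>k\<in>{..<n}. lq_norm q (Suc n) (b0 e k) ^ q' \<le> M e ^ q'"
  proof
    fix k assume "k \<in> {..<n}"
    hence k: "k < n" by simp
    have nk: "lq_norm q n (b0 e k) = real p" using lqU lqV k by (simp add: b0_def)
    have bn: "\<bar>b0 e k n\<bar> \<le> K * e"
    proof (cases "k = 0")
      case True
      have nn: "e * (1 + 2 * T) \<ge> 0" using e T_ge by simp
      have "\<bar>utilde p n s e n\<bar> = e * ((1 + 2 * T) / real p)" unfolding Un_eq using e TK nn by simp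
      also have "\<dots> \<le> e * K" using e unfolding K_def by (intro mult_left_mono) auto
      finally show ?thesis using True by (simp add: b0_def mult.commute)
    next
      case False
      have "\<bar>vvec p n e k n\<bar> = 2 * e" using False e by (simp add: vvec_n)
      also have "\<dots> \<le> K * e" using e TK unfolding K_def by (intro mult_right_mono) auto
      finally show ?thesis using False by (simp add: b0_def)
    qed
    have "lq_norm q (Suc n) (b0 e k) ^ q \<le> M e ^ q"
      unfolding lq_Suc[OF q] nk M_pow[OF less_imp_le[OF e]] using bn by (intro add_left_mono power_mono) auto
    hence "lq_norm q (Suc n) (b0 e k) \<le> M e" using pow_le_base[OF q _ M_nonneg] by blast
    thus "lq_norm q (Suc n) (b0 e k) ^ q' \<le> M e ^ q'" by (intro power_mono lq_nonneg)
  qed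
  hence "basis_cost q q' n (b0 e) \<le> real (card {..<n}) * M e ^ q'"
    unfolding basis_cost_def by (intro sum_bounded_above) auto
  thus ?thesis by simp
qed

lemma cost_lower:
  assumes b: "is_basis n (Ltilde p n s e) b" and i0: "i0 < n"
    and bi0: "b i0 = vvec p n e 0 \<or> b i0 = (\<lambda>j. - vvec p n e 0 j)"
  shows "basis_cost q q' n b \<ge> R ^ q' + real (n - 1) * real p ^ q'"
proof -
  obtain k1 where k1: "k1 < n" and bk1: "lq_norm q (Suc n) (b k1) \<ge> R" using big[OF b i0 bi0] by blast
  have gp: "\<And>k. k < n \<Longrightarrow> real p \<le> lq_norm q (Suc n) (b k)"
    using ge_p[OF basis_mem[OF b] basis_nz[OF b]] lq_Suc_ge[OF q] order_trans by blast
  have "basis_cost q q' n b = lq_norm q (Suc n) (b k1) ^ q' + (\<Sum>k\<in>{..<n} - {k1}. lq_norm q (Suc n) (b k) ^ q')"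
    unfolding basis_cost_def using k1 by (simp add: sum.remove)
  moreover have "R ^ q' \<le> lq_norm q (Suc n) (b k1) ^ q'" using bk1 R_gt by (intro power_mono) auto
  moreover have "real (card ({..<n} - {k1})) * real p ^ q' \<le> (\<Sum>k\<in>{..<n} - {k1}. lq_norm q (Suc n) (b k) ^ q')"
    using gp by (intro sum_bounded_below power_mono) auto
  moreover have "card ({..<n} - {k1}) = n - 1" using k1 by simp
  ultimately show ?thesis by simp
qed

lemma small_e: assumes q': "q' \<ge> 1" shows "\<exists>e0>0. \<forall>e. 0 < e \<and> e < e0 \<longrightarrow> real n * M e ^ q' < R ^ q' + real (n - 1) * real p ^ q'"
proof -
  have pnz: "real p ^ q + 0 ^ q \<noteq> 0" using p0 q by (simp add: zero_power)
  have lim: "((\<lambda>e. real n * M e ^ q') \<longlongrightarrow> real n * ((real p ^ q + (K * 0) ^ q) powr (1 / real q)) ^ q') (at_right 0)"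
    unfolding M_def using pnz
    by (intro tendsto_intros tendsto_powr) (auto intro: tendsto_ident_at)
  have "(real p ^ q + (K * 0) ^ q) powr (1 / real q) = real p"
  proof -
    have "(real p ^ q) powr (1 / real q) = (real p powr real q) powr (1 / real q)"
      using p0 by (simp add: powr_realpow)
    also have "\<dots> = real p" using q by (simp add: powr_powr)
    finally show ?thesis using q by (simp add: zero_power)
  qed
  hence lim2: "((\<lambda>e. real n * M e ^ q') \<longlongrightarrow> real n * real p ^ q') (at_right 0)" using lim by simp
  have "real p ^ q' < R ^ q'" using R_gt q' by (intro power_strict_mono) auto
  hence "real n * real p ^ q' < R ^ q' + real (n - 1) * real p ^ q'"
    using n1 by (simp add: of_nat_diff algebra_simps)
  from order_tendstoD(2)[OF lim2 this] show ?thesis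
    unfolding eventually_at_right_field by auto
qed

end

theorem corollary4p8:
  fixes q q' p n :: nat and s :: "nat \<Rightarrow> int" and R :: real
  assumes q_pos: "q \<ge> 1" and q'_pos: "q' \<ge> 1"
    and p_prime: "prime p" and p_ge: "p \<ge> 7" and n_ge: "n \<ge> 2"
    and s_vals: "\<forall>i\<in>{1..n-1}. s i = 2 \<or> s i = 3"
    and s_sum: "(\<Sum>i=1..n-1. s i ^ q) = int p ^ q - 1"
    and s_mod: "\<forall>k::int. k mod int p \<noteq> 0 \<and> k mod int p \<noteq> 1 \<and> k mod int p \<noteq> int p - 1
                 \<longrightarrow> modp_norm q p n (\<lambda>i. k * s i) > modp_norm q p n s"
    and q_ge2: "q \<ge> 2 \<longrightarrow> 4 * n - 3 > 2 * p"
    and R_gt: "R > real p"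
    and R_ball: "Lplus p n s \<inter> {x. lq_norm q n x < R} =
       {(\<lambda>j. 0), uvec n s, (\<lambda>j. - uvec n s j)} \<union>
       (\<Union>i<n. {Wvec p n i, (\<lambda>j. - Wvec p n i j)})"
  shows "\<exists>e0>0. \<forall>e::real. 0 < e \<and> e < e0 \<and> e < (R - real p) / 2 \<and>
            e ^ q < real p ^ q * (R ^ q - real p ^ q) / (real ((n - 1) * (p - 1) + 1)) ^ q
          \<longrightarrow> (vvec p n e 0 \<in> Ltilde p n s e \<and>
               (\<forall>x\<in>Ltilde p n s e. x \<noteq> (\<lambda>j. 0) \<longrightarrow>
                   lq_norm q (Suc n) (vvec p n e 0) \<le> lq_norm q (Suc n) x)) \<and>
              (\<forall>b. is_basis n (Ltilde p n s e) b \<and>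
                   (\<forall>b'. is_basis n (Ltilde p n s e) b' \<longrightarrow> basis_cost q q' n b \<le> basis_cost q q' n b')
                 \<longrightarrow> (\<forall>i<n. b i \<noteq> vvec p n e 0 \<and> b i \<noteq> (\<lambda>j. - vvec p n e 0 j)))"
proof -
  interpret S: setting q p n s R
    by unfold_locales (rule q_pos p_ge n_ge s_vals s_sum q_ge2 R_gt R_ball)+
  obtain e0 where e0: "e0 > 0" and h: "\<forall>e. 0 < e \<and> e < e0 \<longrightarrow>
      real n * S.M e ^ q' < R ^ q' + real (n - 1) * real p ^ q'"
    using S.small_e[OF q'_pos] by blast
  have "\<forall>e::real. 0 < e \<and> e < e0 \<and> e < (R - real p) / 2 \<and>
            e ^ q < real p ^ q * (R ^ q - real p ^ q) / (real ((n - 1) * (p - 1) + 1)) ^ q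
          \<longrightarrow> (vvec p n e 0 \<in> Ltilde p n s e \<and>
               (\<forall>x\<in>Ltilde p n s e. x \<noteq> (\<lambda>j. 0) \<longrightarrow>
                   lq_norm q (Suc n) (vvec p n e 0) \<le> lq_norm q (Suc n) x)) \<and>
              (\<forall>b. is_basis n (Ltilde p n s e) b \<and>
                   (\<forall>b'. is_basis n (Ltilde p n s e) b' \<longrightarrow> basis_cost q q' n b \<le> basis_cost q q' n b')
                 \<longrightarrow> (\<forall>i<n. b i \<noteq> vvec p n e 0 \<and> b i \<noteq> (\<lambda>j. - vvec p n e 0 j)))"
  proof (intro allI impI)
    fix e :: real
    assume H: "0 < e \<and> e < e0 \<and> e < (R - real p) / 2 \<and>
            e ^ q < real p ^ q * (R ^ q - real p ^ q) / (real ((n - 1) * (p - 1) + 1)) ^ q"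
    have e1: "0 < e" and e2: "e < e0" and e3: "e < R - real p" using H R_gt by auto
    have C1: "vvec p n e 0 \<in> Ltilde p n s e \<and>
               (\<forall>x\<in>Ltilde p n s e. x \<noteq> (\<lambda>j. 0) \<longrightarrow>
                   lq_norm q (Suc n) (vvec p n e 0) \<le> lq_norm q (Suc n) x)"
      using V_in[of 0 n p e s] n_ge S.shortest[OF e1 e3] by auto
    have C2: "\<forall>b. is_basis n (Ltilde p n s e) b \<and>
                   (\<forall>b'. is_basis n (Ltilde p n s e) b' \<longrightarrow> basis_cost q q' n b \<le> basis_cost q q' n b')
                 \<longrightarrow> (\<forall>i<n. b i \<noteq> vvec p n e 0 \<and> b i \<noteq> (\<lambda>j. - vvec p n e 0 j))"
    proof (intro allI impI)
      fix b i
      assume hb: "is_basis n (Ltilde p n s e) b \<and>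
                   (\<forall>b'. is_basis n (Ltilde p n s e) b' \<longrightarrow> basis_cost q q' n b \<le> basis_cost q q' n b')"
        and i: "i < n"
      show "b i \<noteq> vvec p n e 0 \<and> b i \<noteq> (\<lambda>j. - vvec p n e 0 j)"
      proof (rule ccontr)
        assume "\<not> (b i \<noteq> vvec p n e 0 \<and> b i \<noteq> (\<lambda>j. - vvec p n e 0 j))"
        hence bi: "b i = vvec p n e 0 \<or> b i = (\<lambda>j. - vvec p n e 0 j)" by blast
        have "basis_cost q q' n b \<ge> R ^ q' + real (n - 1) * real p ^ q'"
          by (rule S.cost_lower[OF conjunct1[OF hb] i bi])
        moreover have "basis_cost q q' n b \<le> basis_cost q q' n (S.b0 e)"
          using hb S.b0_basis by blast
        moreover have "basis_cost q q' n (S.b0 e) \<le> real n * S.M e ^ q'" by (rule S.cost_upper[OF e1])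
        moreover have "real n * S.M e ^ q' < R ^ q' + real (n - 1) * real p ^ q'" using h e1 e2 by blast
        ultimately show False by linarith
      qed
    qed
    show "(vvec p n e 0 \<in> Ltilde p n s e \<and>
               (\<forall>x\<in>Ltilde p n s e. x \<noteq> (\<lambda>j. 0) \<longrightarrow>
                   lq_norm q (Suc n) (vvec p n e 0) \<le> lq_norm q (Suc n) x)) \<and>
              (\<forall>b. is_basis n (Ltilde p n s e) b \<and>
                   (\<forall>b'. is_basis n (Ltilde p n s e) b' \<longrightarrow> basis_cost q q' n b \<le> basis_cost q q' n b')
                 \<longrightarrow> (\<forall>i<n. b i \<noteq> vvec p n e 0 \<and> b i \<noteq> (\<lambda>j. - vvec p n e 0 j)))"
      using C1 C2 by blast
  qed
  thus ?thesis using e0 by blast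
qed

end
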